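(* Let $s,t,\eta>0$, $A\in\mathbb{R}^{m\times N}$ and $K\subset[N]$. Suppose there exists $\nu\in\mathbb{R}^m$ with $A^T\nu\in H_K^t$ and $\|\nu\|_2\le s$. Let $x_0=\mathbb{1}_K$ and $b=Ax_0+n$ with $n\in\mathbb{R}^m$, $\|n\|_2\le\eta$. Then any solution $x_*$ of $$\min\|Ax-b\|_2\ \text{subject to}\ x\in[0,1]^N,$$ or of $$\min\|x\|_1\ \text{subject to}\ \|Ax-b\|_2\le\eta,\ x\in[0,1]^N,$$ satisfies $\|x_*-x_0\|_2\le \frac{2s}{t}\eta$.
   Context: $\mathbb{1}_K$ is the indicator vector of $K\subset[N]$. For $t>0$, $H_K^t=\{w\in\mathbb{R}^N: w_i<-t \text{ for } i\in K,\ w_i>t \text{ for } i\notin K\}$. *)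

theory Defs
  imports "HOL-Analysis.Analysis"
begin

text \<open>Index set [N] is the finite type 'n; [m] is the finite type 'm.\<close>

definition indicator_vec :: "'n::finite set \<Rightarrow> real ^ 'n" where
  "indicator_vec K = (\<chi> i. if i \<in> K then 1 else 0)"

definition H_set :: "'n::finite set \<Rightarrow> real \<Rightarrow> (real ^ 'n) set" where
  "H_set K t = {w. (\<forall>i\<in>K. w $ i < - t) \<and> (\<forall>i. i \<notin> K \<longrightarrow> w $ i > t)}"

definition unit_box :: "(real ^ 'n::finite) set" where
  "unit_box = {x. \<forall>i. 0 \<le> x $ i \<and> x $ i \<le> 1}"

definition l1norm :: "real ^ 'n::finite \<Rightarrow> real" where
  "l1norm x = (\<Sum>i\<in>UNIV. \<bar>x $ i\<bar>)"

definition is_box_ls_solution :: "real ^ 'n ^ 'm \<Rightarrow> real ^ 'm \<Rightarrow> real ^ 'n \<Rightarrow> bool" where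
  "is_box_ls_solution A b x \<longleftrightarrow> x \<in> unit_box \<and>
     (\<forall>y\<in>unit_box. norm (A *v x - b) \<le> norm (A *v y - b))"

definition is_box_bpdn_solution :: "real ^ 'n ^ 'm \<Rightarrow> real ^ 'm \<Rightarrow> real \<Rightarrow> real ^ 'n \<Rightarrow> bool" where
  "is_box_bpdn_solution A b \<eta> x \<longleftrightarrow> x \<in> unit_box \<and> norm (A *v x - b) \<le> \<eta> \<and>
     (\<forall>y\<in>unit_box. norm (A *v y - b) \<le> \<eta> \<longrightarrow> l1norm x \<le> l1norm y)"

end

theory Submission
  imports Defs
begin

theorem proposition3p4:
  fixes A :: "real ^ 'n ^ 'm" and K :: "'n set" and s t \<eta> :: real
    and \<nu> :: "real ^ 'm" and n :: "real ^ 'm" and b :: "real ^ 'm" and xs :: "real ^ 'n"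
  assumes "s > 0" and "t > 0" and "\<eta> > 0"
    and "transpose A *v \<nu> \<in> H_set K t" and "norm \<nu> \<le> s"
    and "b = A *v indicator_vec K + n" and "norm n \<le> \<eta>"
    and "is_box_ls_solution A b xs \<or> is_box_bpdn_solution A b \<eta> xs"
  shows "norm (xs - indicator_vec K) \<le> 2 * s / t * \<eta>"
proof -
  define x0 where "x0 = indicator_vec K"
  define w where "w = transpose A *v \<nu>"
  define h where "h = xs - x0"
  have x0box: "x0 \<in> unit_box" by (simp add: x0_def unit_box_def indicator_vec_def)
  have xsbox: "xs \<in> unit_box" using assms(8) by (auto simp: is_box_ls_solution_def is_box_bpdn_solution_def)
  have res: "norm (A *v xs - b) \<le> \<eta>"
  proof (cases "is_box_ls_solution A b xs")
    case True
    then have "norm (A *v xs - b) \<le> norm (A *v x0 - b)" using x0box by (auto simp: is_box_ls_solution_def)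
    also have "A *v x0 - b = - n" using assms(6) by (simp add: x0_def)
    finally show ?thesis using assms(7) by simp
  next
    case False
    then show ?thesis using assms(8) by (auto simp: is_box_bpdn_solution_def)
  qed
  have Ah: "A *v h = (A *v xs - b) + n"
    using assms(6) by (simp add: h_def x0_def matrix_vector_mult_diff_distrib)
  have nAh: "norm (A *v h) \<le> 2 * \<eta>"
    using Ah res assms(7) norm_triangle_ineq[of "A *v xs - b" n] by simp
  have key: "t * \<bar>h$i\<bar> \<le> w$i * h$i" for i
  proof (cases "i \<in> K")
    case True
    then have "w$i < - t" using assms(4) by (simp add: w_def H_set_def)
    moreover have "h$i \<le> 0" "h$i = xs$i - 1" using True xsbox
      by (auto simp: h_def x0_def indicator_vec_def unit_box_def)
    ultimately have "w$i * h$i = (- w$i) * \<bar>h$i\<bar>" "t \<le> - w$i" by (auto simp: algebra_simps)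
    then show ?thesis using mult_right_mono[of t "- w$i" "\<bar>h$i\<bar>"] by simp
  next
    case False
    then have "w$i > t" using assms(4) by (simp add: w_def H_set_def)
    moreover have "h$i \<ge> 0" using False xsbox
      by (auto simp: h_def x0_def indicator_vec_def unit_box_def)
    ultimately show ?thesis by (simp add: mult_right_mono)
  qed
  have "t * (\<Sum>i\<in>UNIV. \<bar>h$i\<bar>) \<le> (\<Sum>i\<in>UNIV. w$i * h$i)"
    unfolding sum_distrib_left by (rule sum_mono) (rule key)
  also have "\<dots> = w \<bullet> h" by (simp add: inner_vec_def)
  also have "\<dots> = \<nu> \<bullet> (A *v h)" unfolding w_def by (simp add: dot_lmul_matrix)
  also have "\<dots> \<le> norm \<nu> * norm (A *v h)" by (rule norm_cauchy_schwarz)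
  also have "\<dots> \<le> s * (2 * \<eta>)" using assms(1,5) nAh by (intro mult_mono) auto
  finally have l: "t * (\<Sum>i\<in>UNIV. \<bar>h$i\<bar>) \<le> s * (2 * \<eta>)" .
  have "t * norm h \<le> t * (\<Sum>i\<in>UNIV. \<bar>h$i\<bar>)"
    using norm_le_l1_cart[of h] assms(2) by (intro mult_left_mono) auto
  with l have "t * norm h \<le> s * (2 * \<eta>)" by linarith
  then show ?thesis using assms(2) unfolding h_def x0_def by (simp add: field_simps)
qed

end
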